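(* For every $n\ge 0$, the element $MC_n(\xi)=\sum_{|\alpha|=n}\mu(-(n+1);\overline\alpha)\,r_*[\mathbb{C}P^{n-|\alpha|'}]\,a^\alpha$ equals \[ \sum_{k=0}^n r_*[\mathbb{C}P^{n-k}]\cdot\Big(a_0^{2n+1}\big(\textstyle\sum_{i\ge0}a_iz^i\big)^{-(n+1)}\Big)[z^k], \] where $S(z)[z^k]$ denotes the coefficient of $z^k$ in the formal power series $S(z)$.
   Context: Here $a_0,a_1,\ldots$ are the elements of $BP^*\llbracket\xi\rrbracket$ defined by $\prod_{i=0}^{p-1}([i]\xi+_Fx)=\sum_{i\ge0}a_ix^{i+1}$ for the $BP$ formal group law $F$ (in particular $a_0=\chi=\prod_{i=1}^{p-1}[i]\xi$, which is not a zero divisor after reduction modulo $\langle p\rangle\xi$), $r_*[\mathbb{C}P^m]\in BP^{-2m}$ is the image of the class of $\mathbb{C}P^m$ under Quillen's map $r\colon MU_{(p)}\to BP$. Multi-indices $\alpha=(\alpha_0,\alpha_1,\ldots)$ of nonnegative integers, almost all zero; $\overline\alpha=(\alpha_1,\alpha_2,\ldots)$, $|\alpha|=\sum\alpha_i$, $|\alpha|'=\sum i\alpha_i$, $a^\alpha=\prod a_i^{\alpha_i}$. For an integer $m$, $\mu(m;\overline\alpha)$ is defined by $(1+b_1+b_2+\cdots)^m=\sum_{\overline\alpha}\mu(m;\overline\alpha)b_1^{\alpha_1}b_2^{\alpha_2}\cdots$. The coefficient of $z^k$ for $k\le n$ in $a_0^{2n+1}(\sum a_iz^i)^{-(n+1)}$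 is a polynomial in the $a_i$. *)

theory Defs
  imports "HOL-Computational_Algebra.Formal_Power_Series" "HOL-Computational_Algebra.Fraction_Field"
begin

text \<open>The generalized multinomial coefficient
  mu(m; beta), defined by (1 + b_1 + b_2 + ...)^m = sum mu(m;beta) b^beta, equals
  m (m-1) ... (m-|beta|+1) / prod_i beta_i!  (= (m gchoose |beta|) |beta|! / prod beta_i!)  (expand (1+B)^m binomially in
  B = b_1 + b_2 + ..., then B^k multinomially).\<close>
definition gen_multinom :: "int \<Rightarrow> (nat \<Rightarrow> nat) \<Rightarrow> int" where
  "gen_multinom m \<beta> = (let s = (\<Sum>i\<in>{i. \<beta> i \<noteq> 0}. \<beta> i) in
      (\<Prod>j<s. (m - int j)) div (\<Prod>i\<in>{i. \<beta> i \<noteq> 0}. int (fact (\<beta> i))))"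

text \<open>Multi-indices alpha with |alpha| = n and |alpha|' <= n (the terms with
  |alpha|' > n vanish since CP^m = 0 for m < 0); such alpha are supported in {0..n}.\<close>
definition multi_indices :: "nat \<Rightarrow> (nat \<Rightarrow> nat) set" where
  "multi_indices n = {\<alpha>. (\<forall>i>n. \<alpha> i = 0) \<and> (\<Sum>i\<le>n. \<alpha> i) = n \<and> (\<Sum>i\<le>n. i * \<alpha> i) \<le> n}"

text \<open>MC_n = sum_{|alpha|=n} mu(-(n+1); alpha-bar) c_{n-|alpha|'} a^alpha,
  where c m plays the role of r_*[CP^m].\<close>
definition MC :: "(nat \<Rightarrow> 'a::comm_ring_1) \<Rightarrow> (nat \<Rightarrow> 'a) \<Rightarrow> nat \<Rightarrow> 'a" where
  "MC a c n = (\<Sum>\<alpha>\<in>multi_indices n.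
      of_int (gen_multinom (- (int n + 1)) (\<lambda>i. \<alpha> (Suc i))) * c (n - (\<Sum>i\<le>n. i * \<alpha> i))
      * (\<Prod>i\<le>n. a i ^ \<alpha> i))"

definition frac_emb :: "'a::idom \<Rightarrow> 'a fract" where
  "frac_emb x = Fract x 1"

end

theory Submission
  imports Defs "HOL-Combinatorics.Multiset_Permutations"
begin

unbundle fps_syntax

lemma alt_pow:
  "(Abs_fps (\<lambda>s. (-1::'b::field)^s))^(Suc n) = Abs_fps (\<lambda>s. (-1)^s * of_nat ((n+s) choose s))"
proof (induction n)
  case 0
  then show ?case by simp
next
  case (Suc n)
  show ?case
  proof (rule fps_ext)
    fix s
    have "((Abs_fps (\<lambda>s. (-1::'b)^s))^(Suc (Suc n))) $ s
        = (\<Sum>i=0..s. (-1)^i * ((-1)^(s-i) * of_nat ((n+(s-i)) choose (s-i))))"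
      by (simp only: power_Suc[of _ "Suc n"] Suc.IH fps_mult_nth) simp
    also have "\<dots> = (\<Sum>i=0..s. (-1)^s * of_nat ((n+(s-i)) choose (s-i)))"
      by (intro sum.cong refl) (auto simp: mult.assoc[symmetric] power_add[symmetric])
    also have "\<dots> = (-1)^s * of_nat (\<Sum>i=0..s. (n+(s-i)) choose (s-i))"
      by (simp add: sum_distrib_left)
    also have "(\<Sum>i=0..s. (n+(s-i)) choose (s-i)) = (\<Sum>j\<le>s. (n+j) choose j)"
    proof -
      have "(\<Sum>j=0..s. (n+j) choose j) = (\<Sum>i=0..s. (n+(s+0-i)) choose (s+0-i))"
        by (rule sum.atLeastAtMost_rev)
      then have "(\<Sum>i=0..s. (n+(s-i)) choose (s-i)) = (\<Sum>j=0..s. (n+j) choose j)" by simp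
      then show ?thesis by (simp add: atLeast0AtMost)
    qed
    also have "\<dots> = Suc (n+s) choose s" by (rule sum_choose_lower)
    finally show "((Abs_fps (\<lambda>s. (-1::'b)^s))^(Suc (Suc n))) $ s =
        Abs_fps (\<lambda>s. (-1)^s * of_nat ((Suc n+s) choose s)) $ s" by simp
  qed
qed

lemma inv_pow_compose:
  fixes b :: "'b::field fps"
  assumes b0: "b $ 0 = 0"
  shows "inverse ((1 + b)^(Suc n)) = Abs_fps (\<lambda>s. (-1)^s * of_nat ((n+s) choose s)) oo b"
proof -
  have "(1 + fps_X)^(Suc n) oo b = (1 + b)^(Suc n)"
  proof -
    have "(1 + fps_X) oo b = 1 + b" by (simp add: fps_compose_add_distrib b0)
    then show ?thesis by (simp only: fps_compose_power[OF b0, symmetric])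
  qed
  moreover have "inverse ((1 + fps_X)^(Suc n)) oo b = inverse ((1 + fps_X)^(Suc n) oo b)"
    by (rule fps_inverse_compose[OF b0]) simp
  moreover have "inverse ((1 + fps_X :: 'b fps)^(Suc n)) = Abs_fps (\<lambda>s. (-1)^s * of_nat ((n+s) choose s))"
    by (simp only: fps_inverse_power fps_inverse_fps_X_plus1 alt_pow)
  ultimately show ?thesis by simp
qed


definition Lst :: "nat \<Rightarrow> nat \<Rightarrow> nat list set" where
  "Lst s k = {xs. length xs = s \<and> (\<forall>x\<in>set xs. 0 < x) \<and> sum_list xs = k}"

lemma finite_Lst: "finite (Lst s k)"
proof -
  have "Lst s k \<subseteq> {xs. set xs \<subseteq> {..k} \<and> length xs = s}"
    unfolding Lst_def using member_le_sum_list by fastforce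
  moreover have "finite {xs. set xs \<subseteq> {..k} \<and> length xs = s}"
    by (rule finite_lists_length_eq) simp
  ultimately show ?thesis by (rule finite_subset)
qed

lemma Lst_0: "Lst 0 k = (if k = 0 then {[]} else {})"
  by (auto simp: Lst_def)

lemma Lst_Suc: "Lst (Suc s) k = (\<lambda>p. fst p # snd p) ` (SIGMA i:{1..k}. Lst s (k-i))"
proof (rule set_eqI)
  fix ys
  show "ys \<in> Lst (Suc s) k \<longleftrightarrow> ys \<in> (\<lambda>p. fst p # snd p) ` (SIGMA i:{1..k}. Lst s (k-i))"
  proof
    assume "ys \<in> Lst (Suc s) k"
    then obtain i xs where ys: "ys = i # xs" and l: "length xs = s" and p: "0 < i" "\<forall>x\<in>set xs. 0 < x"
      and sm: "i + sum_list xs = k"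
      unfolding Lst_def by (cases ys) auto
    then have "(i, xs) \<in> (SIGMA i:{1..k}. Lst s (k-i))" by (auto simp: Lst_def)
    then show "ys \<in> (\<lambda>p. fst p # snd p) ` (SIGMA i:{1..k}. Lst s (k-i))" using ys by force
  next
    assume "ys \<in> (\<lambda>p. fst p # snd p) ` (SIGMA i:{1..k}. Lst s (k-i))"
    then show "ys \<in> Lst (Suc s) k" by (auto simp: Lst_def)
  qed
qed

lemma pow_nth_lists:
  fixes B :: "'b::comm_ring_1 fps"
  assumes B0: "B $ 0 = 0"
  shows "(B^s) $ k = (\<Sum>xs\<in>Lst s k. prod_list (map (($) B) xs))"
proof (induction s arbitrary: k)
  case 0
  then show ?case by (simp add: Lst_0)
next
  case (Suc s)
  have "(B^Suc s) $ k = (\<Sum>i=0..k. B$i * (B^s) $ (k-i))"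
    by (simp add: fps_mult_nth)
  also have "\<dots> = (\<Sum>i\<in>{1..k}. B$i * (B^s) $ (k-i))"
    by (rule sum.mono_neutral_right) (auto simp: B0 not_less_eq_eq)
  also have "\<dots> = (\<Sum>i\<in>{1..k}. \<Sum>xs\<in>Lst s (k-i). prod_list (map (($) B) (i#xs)))"
    by (simp add: Suc.IH sum_distrib_left)
  also have "\<dots> = (\<Sum>p\<in>(SIGMA i:{1..k}. Lst s (k-i)). prod_list (map (($) B) (fst p # snd p)))"
    by (simp add: sum.Sigma finite_Lst split_def)
  also have "\<dots> = (\<Sum>xs\<in>Lst (Suc s) k. prod_list (map (($) B) xs))"
    unfolding Lst_Suc by (rule sum.reindex[symmetric, unfolded comp_def]) (auto simp: inj_on_def)
  finally show ?case .
qed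


definition Ms :: "nat \<Rightarrow> nat \<Rightarrow> nat multiset set" where
  "Ms s k = {M. size M = s \<and> (\<forall>x\<in>#M. 0 < x) \<and> sum_mset M = k}"

lemma sum_mset_image_count:
  fixes g :: "'x \<Rightarrow> 'b::comm_semiring_1"
  assumes "finite S" "set_mset M \<subseteq> S"
  shows "sum_mset (image_mset g M) = (\<Sum>x\<in>S. of_nat (count M x) * g x)"
  using assms(2)
proof (induction M)
  case empty
  then show ?case by simp
next
  case (add y M)
  then have yS: "y \<in> S" and MS: "set_mset M \<subseteq> S" by auto
  have "(\<Sum>x\<in>S. of_nat (count (add_mset y M) x) * g x)
      = (\<Sum>x\<in>S. of_nat (count M x) * g x + (if x = y then g x else 0))"
    by (intro sum.cong refl) (auto simp: algebra_simps)
  also have "\<dots> = (\<Sum>x\<in>S. of_nat (count M x) * g x) + g y"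
    using yS assms(1) by (simp add: sum.distrib)
  finally show ?case using add.IH[OF MS] by (simp add: add.commute)
qed

lemma prod_mset_image_count:
  fixes g :: "'x \<Rightarrow> 'b::comm_monoid_mult"
  assumes "finite S" "set_mset M \<subseteq> S"
  shows "prod_mset (image_mset g M) = (\<Prod>x\<in>S. g x ^ count M x)"
  using assms(2)
proof (induction M)
  case empty
  then show ?case by simp
next
  case (add y M)
  then have yS: "y \<in> S" and MS: "set_mset M \<subseteq> S" by auto
  have "(\<Prod>x\<in>S. g x ^ count (add_mset y M) x)
      = (\<Prod>x\<in>S. g x ^ count M x * (if x = y then g x else 1))"
    by (intro prod.cong refl) (auto simp: algebra_simps)
  also have "\<dots> = (\<Prod>x\<in>S. g x ^ count M x) * g y"
    using yS assms(1) by (simp add: prod.distrib)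
  finally show ?case using add.IH[OF MS] by (simp add: mult.commute)
qed

lemma size_count:
  assumes "finite S" "set_mset M \<subseteq> S"
  shows "size M = (\<Sum>x\<in>S. count M x)"
  using assms(2)
proof (induction M)
  case empty
  then show ?case by simp
next
  case (add y M)
  then have yS: "y \<in> S" and MS: "set_mset M \<subseteq> S" by auto
  have "(\<Sum>x\<in>S. count (add_mset y M) x) = (\<Sum>x\<in>S. count M x + (if x = y then 1 else 0))"
    by (intro sum.cong refl) auto
  also have "\<dots> = (\<Sum>x\<in>S. count M x) + 1"
    using yS assms(1) by (simp add: sum.distrib)
  finally show ?case using add.IH[OF MS] by simp
qed

lemma summset_count:
  assumes "finite S" "set_mset M \<subseteq> S"
  shows "sum_mset M = (\<Sum>x\<in>S. x * count M x)"
proof -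
  have "sum_mset (image_mset (\<lambda>x. x) M) = (\<Sum>x\<in>S. of_nat (count M x) * x)"
    by (rule sum_mset_image_count[OF assms])
  then show ?thesis by (simp add: mult.commute)
qed

lemma mem_le_summset: "(x::nat) \<in># M \<Longrightarrow> x \<le> sum_mset M"
  using sum_mset.remove[of x M] by simp


lemma mset_Lst: "xs \<in> Lst s k \<longleftrightarrow> mset xs \<in> Ms s k"
  by (auto simp: Lst_def Ms_def sum_mset_sum_list)

lemma Ms_image: "Ms s k = mset ` Lst s k"
proof (rule set_eqI)
  fix M
  show "M \<in> Ms s k \<longleftrightarrow> M \<in> mset ` Lst s k"
  proof
    assume "M \<in> Ms s k"
    moreover obtain xs where "mset xs = M" using ex_mset by blast
    ultimately show "M \<in> mset ` Lst s k" using mset_Lst by blast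
  qed (auto simp: mset_Lst)
qed

lemma finite_Ms: "finite (Ms s k)"
  unfolding Ms_image using finite_Lst by simp

lemma lists_group:
  fixes f :: "nat \<Rightarrow> 'b::comm_ring_1"
  shows "(\<Sum>xs\<in>Lst s k. prod_list (map f xs)) =
    (\<Sum>M\<in>Ms s k. of_nat (card (permutations_of_multiset M)) * prod_mset (image_mset f M))"
proof -
  have "(\<Sum>xs\<in>Lst s k. prod_list (map f xs)) =
     (\<Sum>M\<in>mset ` Lst s k. \<Sum>xs\<in>{xs. xs \<in> Lst s k \<and> mset xs = M}. prod_list (map f xs))"
    by (rule sum.image_gen[OF finite_Lst])
  also have "\<dots> = (\<Sum>M\<in>Ms s k. \<Sum>xs\<in>permutations_of_multiset M. prod_mset (image_mset f M))"
    unfolding Ms_image[symmetric]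
  proof (rule sum.cong[OF refl])
    fix M assume M: "M \<in> Ms s k"
    have "{xs. xs \<in> Lst s k \<and> mset xs = M} = permutations_of_multiset M"
      using M by (auto simp: permutations_of_multiset_def mset_Lst)
    moreover have "prod_list (map f xs) = prod_mset (image_mset f M)" if "xs \<in> permutations_of_multiset M" for xs
      using that by (auto simp: permutations_of_multiset_def prod_mset_prod_list[symmetric])
    ultimately show "(\<Sum>xs\<in>{xs. xs \<in> Lst s k \<and> mset xs = M}. prod_list (map f xs)) =
        (\<Sum>xs\<in>permutations_of_multiset M. prod_mset (image_mset f M))"
      by (intro sum.cong) auto
  qed
  also have "\<dots> = (\<Sum>M\<in>Ms s k. of_nat (card (permutations_of_multiset M)) * prod_mset (image_mset f M))"
    by simp
  finally show ?thesis .
qed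


lemma frac_emb_0: "frac_emb 0 = 0" by (simp add: frac_emb_def Zero_fract_def)
lemma frac_emb_1: "frac_emb 1 = 1" by (simp add: frac_emb_def One_fract_def)
lemma frac_emb_add: "frac_emb (x + y) = frac_emb x + frac_emb y" by (simp add: frac_emb_def)
lemma frac_emb_mult: "frac_emb (x * y) = frac_emb x * frac_emb y" by (simp add: frac_emb_def)
lemma frac_emb_uminus: "frac_emb (- x) = - frac_emb x" by (simp add: frac_emb_def)
lemma frac_emb_eq0: "frac_emb x = 0 \<longleftrightarrow> x = 0"
  by (simp add: frac_emb_def Zero_fract_def eq_fract)
lemma frac_emb_of_nat: "frac_emb (of_nat m) = of_nat m"
  by (simp add: frac_emb_def Fract_of_nat_eq)
lemma frac_emb_of_int: "frac_emb (of_int z) = of_int z"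
proof (cases z rule: int_cases)
  case (nonneg m)
  then show ?thesis by (simp add: frac_emb_of_nat)
next
  case (neg m)
  then show ?thesis by (simp only: of_int_minus frac_emb_uminus of_int_of_nat_eq frac_emb_of_nat)
qed
lemma frac_emb_power: "frac_emb (x ^ m) = frac_emb x ^ m"
  by (induction m) (simp_all add: frac_emb_1 frac_emb_mult)
lemma frac_emb_sum: "frac_emb (sum f A) = (\<Sum>x\<in>A. frac_emb (f x))"
  by (induction A rule: infinite_finite_induct) (simp_all add: frac_emb_0 frac_emb_add)
lemma frac_emb_prod: "frac_emb (prod f A) = (\<Prod>x\<in>A. frac_emb (f x))"
  by (induction A rule: infinite_finite_induct) (simp_all add: frac_emb_1 frac_emb_mult)

lemma prod_rising: "(\<Prod>j<s. n + 1 + j) = ((n + s) choose s) * fact s"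
proof (induction s)
  case 0
  then show ?case by simp
next
  case (Suc s)
  have "(\<Prod>j<Suc s. n + 1 + j) = ((n + s) choose s) * fact s * (n + 1 + s)"
    by (simp only: prod.lessThan_Suc Suc.IH)
  also have "\<dots> = (Suc (n + s) * ((n + s) choose s)) * fact s" by (simp add: algebra_simps)
  also have "Suc (n + s) * ((n + s) choose s) = Suc s * (Suc (n + s) choose Suc s)"
    by (simp only: Suc_times_binomial_eq mult.commute)
  finally show ?case by (simp add: algebra_simps)
qed

lemma prod_neg: "(\<Prod>j<s. - (int n + 1) - int j) = (-1)^s * int (\<Prod>j<s. n + 1 + j)"
  by (induction s) (simp_all add: algebra_simps)

lemma shift_sum: "(\<Sum>i\<le>n. f i) = f 0 + (\<Sum>i<n. f (Suc i))" for f :: "nat \<Rightarrow> 'b::comm_monoid_add"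
  by (simp only: lessThan_Suc_atMost[symmetric] sum.lessThan_Suc_shift)
lemma shift_prod: "(\<Prod>i\<le>n. f i) = f 0 * (\<Prod>i<n. f (Suc i))" for f :: "nat \<Rightarrow> 'b::comm_monoid_mult"
  by (simp only: lessThan_Suc_atMost[symmetric] prod.lessThan_Suc_shift)

lemma sum_Suc_image: "(\<Sum>x\<in>Suc ` {..<n}. f x) = (\<Sum>i<n. f (Suc i))"
  by (simp add: sum.reindex)
lemma prod_Suc_image: "(\<Prod>x\<in>Suc ` {..<n}. f x) = (\<Prod>i<n. f (Suc i))"
  by (simp add: prod.reindex)


definition wt :: "nat \<Rightarrow> (nat \<Rightarrow> nat) \<Rightarrow> nat" where "wt n \<alpha> = (\<Sum>i\<le>n. i * \<alpha> i)"
definition sa :: "nat \<Rightarrow> (nat \<Rightarrow> nat) \<Rightarrow> nat" where "sa n \<alpha> = (\<Sum>i<n. \<alpha> (Suc i))"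
definition Ma :: "nat \<Rightarrow> (nat \<Rightarrow> nat) \<Rightarrow> nat multiset" where
  "Ma n \<alpha> = (\<Sum>i<n. replicate_mset (\<alpha> (Suc i)) (Suc i))"

lemma MI_zero: "\<alpha> \<in> multi_indices n \<Longrightarrow> n < i \<Longrightarrow> \<alpha> i = 0"
  by (simp add: multi_indices_def)

lemma MI_sum: "\<alpha> \<in> multi_indices n \<Longrightarrow> \<alpha> 0 + sa n \<alpha> = n"
  unfolding multi_indices_def sa_def using shift_sum[of \<alpha> n] by simp

lemma wt_shift: "wt n \<alpha> = (\<Sum>i<n. Suc i * \<alpha> (Suc i))"
  unfolding wt_def using shift_sum[of "\<lambda>i. i * \<alpha> i" n] by simp

lemma count_Ma: "count (Ma n \<alpha>) x = (if 0 < x \<and> x \<le> n then \<alpha> x else 0)"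
proof (cases x)
  case 0
  then show ?thesis by (simp add: Ma_def count_sum)
next
  case (Suc y)
  have "count (Ma n \<alpha>) x = (\<Sum>i<n. if i = y then \<alpha> (Suc i) else 0)"
    unfolding Ma_def count_sum using Suc by (intro sum.cong) auto
  also have "\<dots> = (if y < n then \<alpha> (Suc y) else 0)" by simp
  finally show ?thesis using Suc by auto
qed

lemma set_Ma: "set_mset (Ma n \<alpha>) \<subseteq> Suc ` {..<n}"
proof
  fix x assume "x \<in># Ma n \<alpha>"
  then have "count (Ma n \<alpha>) x > 0" by simp
  then have "0 < x" "x \<le> n" by (auto simp: count_Ma split: if_splits)
  then show "x \<in> Suc ` {..<n}" by (cases x) auto
qed

lemma size_Ma: "size (Ma n \<alpha>) = sa n \<alpha>"
proof -
  have "size (Ma n \<alpha>) = (\<Sum>x\<in>Suc ` {..<n}. count (Ma n \<alpha>) x)"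
    by (rule size_count[OF _ set_Ma]) simp
  also have "\<dots> = (\<Sum>i<n. count (Ma n \<alpha>) (Suc i))" by (rule sum_Suc_image)
  also have "\<dots> = sa n \<alpha>" unfolding sa_def by (intro sum.cong) (auto simp: count_Ma)
  finally show ?thesis .
qed

lemma summ_Ma: "sum_mset (Ma n \<alpha>) = wt n \<alpha>"
proof -
  have "sum_mset (Ma n \<alpha>) = (\<Sum>x\<in>Suc ` {..<n}. x * count (Ma n \<alpha>) x)"
    by (rule summset_count[OF _ set_Ma]) simp
  also have "\<dots> = (\<Sum>i<n. Suc i * count (Ma n \<alpha>) (Suc i))" by (rule sum_Suc_image)
  also have "\<dots> = wt n \<alpha>" unfolding wt_shift by (intro sum.cong) (auto simp: count_Ma)
  finally show ?thesis .
qed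

lemma sa_le_wt: "sa n \<alpha> \<le> wt n \<alpha>"
  unfolding sa_def wt_shift by (intro sum_mono) simp

lemma Ms_sub: "M \<in> Ms s k \<Longrightarrow> k \<le> n \<Longrightarrow> set_mset M \<subseteq> Suc ` {..<n}"
proof
  fix x assume M: "M \<in> Ms s k" "k \<le> n" and x: "x \<in># M"
  then have "0 < x" "x \<le> n" using mem_le_summset[OF x] by (auto simp: Ms_def)
  then show "x \<in> Suc ` {..<n}" by (cases x) auto
qed


lemma gm_eq:
  assumes MI: "\<alpha> \<in> multi_indices n"
  shows "gen_multinom (-(int n + 1)) (\<lambda>i. \<alpha> (Suc i)) =
    (-1)^(sa n \<alpha>) * int ((n + sa n \<alpha>) choose sa n \<alpha>) * int (card (permutations_of_multiset (Ma n \<alpha>)))"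
proof -
  define Sup where "Sup = {i. \<alpha> (Suc i) \<noteq> 0}"
  define M where "M = Ma n \<alpha>"
  define s where "s = sa n \<alpha>"
  define P where "P = (\<Prod>x\<in>set_mset M. fact (count M x) :: nat)"
  have Sup_sub: "Sup \<subseteq> {..<n}"
  proof
    fix i assume "i \<in> Sup"
    then have "\<alpha> (Suc i) \<noteq> 0" by (simp add: Sup_def)
    then have "\<not> n < Suc i" using MI_zero[OF MI, of "Suc i"] by auto
    then show "i \<in> {..<n}" by simp
  qed
  have s': "(\<Sum>i\<in>Sup. \<alpha> (Suc i)) = s"
    unfolding s_def sa_def by (rule sum.mono_neutral_left[OF _ Sup_sub]) (auto simp: Sup_def)
  have setM: "set_mset M = Suc ` Sup"
  proof (rule set_eqI)
    fix x
    show "x \<in> set_mset M \<longleftrightarrow> x \<in> Suc ` Sup"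
    proof
      assume "x \<in> set_mset M"
      then have "count M x > 0" by simp
      then have "0 < x" "\<alpha> x \<noteq> 0" by (auto simp: M_def count_Ma split: if_splits)
      then show "x \<in> Suc ` Sup" by (cases x) (auto simp: Sup_def)
    next
      assume "x \<in> Suc ` Sup"
      then obtain i where i: "x = Suc i" "i \<in> Sup" by auto
      then have "i < n" using Sup_sub by auto
      then have "count M x \<noteq> 0" using i by (simp add: M_def count_Ma Sup_def)
      then show "x \<in> set_mset M" by (metis not_in_iff)
    qed
  qed
  have den: "(\<Prod>i\<in>Sup. int (fact (\<alpha> (Suc i)))) = int P"
  proof -
    have "P = (\<Prod>i\<in>Sup. fact (count M (Suc i)))"
      unfolding P_def setM by (simp add: prod.reindex)
    also have "\<dots> = (\<Prod>i\<in>Sup. fact (\<alpha> (Suc i)))"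
      using Sup_sub by (intro prod.cong refl) (auto simp: M_def count_Ma)
    finally show ?thesis by simp
  qed
  have cardP: "card (permutations_of_multiset M) * P = fact s"
    using card_permutations_of_multiset_aux[of M] by (simp add: P_def M_def s_def size_Ma)
  have Pnz: "int P \<noteq> 0" unfolding P_def by simp
  have "gen_multinom (-(int n + 1)) (\<lambda>i. \<alpha> (Suc i)) =
      (\<Prod>j<s. - (int n + 1) - int j) div (\<Prod>i\<in>Sup. int (fact (\<alpha> (Suc i))))"
    unfolding gen_multinom_def Let_def Sup_def[symmetric] s' ..
  also have "\<dots> = ((-1)^s * int ((n + s) choose s) * int (card (permutations_of_multiset M))) * int P div int P"
  proof -
    have "(\<Prod>j<s. - (int n + 1) - int j) = (-1)^s * int (((n + s) choose s) * (card (permutations_of_multiset M) * P))"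
      by (simp only: prod_neg prod_rising cardP)
    also have "\<dots> = ((-1)^s * int ((n + s) choose s) * int (card (permutations_of_multiset M))) * int P"
      by (simp only: of_nat_mult mult.assoc)
    finally show ?thesis by (simp only: den)
  qed
  also have "\<dots> = (-1)^s * int ((n + s) choose s) * int (card (permutations_of_multiset M))"
    using Pnz by (rule nonzero_mult_div_cancel_right)
  finally show ?thesis by (simp add: s_def M_def)
qed


lemma coeff_formula:
  fixes b :: "nat \<Rightarrow> 'b::field" and n k :: nat and B :: "'b fps"
  assumes b0: "b 0 \<noteq> 0"
  assumes B_def: "B = Abs_fps (\<lambda>i. if i = 0 then 0 else b i / b 0)"
  shows "(fps_const (b 0) ^ (2*n+1) * inverse (Abs_fps b ^ (n+1))) $ k
     = b 0 ^ n * (\<Sum>s=0..k. ((-1)^s * of_nat ((n+s) choose s)) *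
        (\<Sum>M\<in>Ms s k. of_nat (card (permutations_of_multiset M)) * prod_mset (image_mset (($) B) M)))"
proof -
  have A: "Abs_fps b = fps_const (b 0) * (1 + B)"
    by (rule fps_ext) (simp add: B_def b0)
  have B0: "B $ 0 = 0" by (simp add: B_def)
  have "inverse (Abs_fps b ^ (n+1)) = fps_const (inverse (b 0)) ^ (n+1) * inverse ((1+B)^(n+1))"
    by (simp only: A power_mult_distrib fps_inverse_mult fps_inverse_power fps_const_inverse)
  moreover have "fps_const (b 0) ^ (2*n+1) * fps_const (inverse (b 0)) ^ (n+1) = fps_const (b 0 ^ n)"
  proof -
    have "b 0 ^ (2*n+1) * inverse (b 0) ^ (n+1) = b 0 ^ n"
    proof -
      have e: "2*n+1 = n + (n+1)" by simp
      have e1: "b 0 ^ (2*n+1) = b 0 ^ n * b 0 ^ (n+1)" by (subst e, rule power_add)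
      have "b 0 ^ (2*n+1) * inverse (b 0) ^ (n+1) = b 0 ^ n * (b 0 ^ (n+1) * inverse (b 0 ^ (n+1)))"
        by (simp only: e1 mult.assoc power_inverse)
      also have "b 0 ^ (n+1) * inverse (b 0 ^ (n+1)) = 1" using b0 by (intro right_inverse) simp
      finally show ?thesis by simp
    qed
    then show ?thesis by (simp only: fps_const_power fps_const_mult)
  qed
  ultimately have "fps_const (b 0) ^ (2*n+1) * inverse (Abs_fps b ^ (n+1))
      = fps_const (b 0 ^ n) * inverse ((1+B)^(n+1))"
    by (simp only: mult.assoc[symmetric])
  also have "inverse ((1+B)^(n+1)) = Abs_fps (\<lambda>s. (-1)^s * of_nat ((n+s) choose s)) oo B"
    using inv_pow_compose[OF B0, of n] by (simp only: Suc_eq_plus1)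
  finally have "(fps_const (b 0) ^ (2*n+1) * inverse (Abs_fps b ^ (n+1))) $ k
     = b 0 ^ n * (\<Sum>s=0..k. ((-1)^s * of_nat ((n+s) choose s)) * (B^s $ k))"
    by (simp only: fps_mult_left_const_nth fps_compose_nth fps_nth_Abs_fps)
  also have "\<dots> = b 0 ^ n * (\<Sum>s=0..k. ((-1)^s * of_nat ((n+s) choose s)) *
        (\<Sum>M\<in>Ms s k. of_nat (card (permutations_of_multiset M)) * prod_mset (image_mset (($) B) M)))"
    by (simp only: pow_nth_lists[OF B0] lists_group)
  finally show ?thesis .
qed


lemma prod_eq:
  fixes b :: "nat \<Rightarrow> 'b::field" and B :: "'b fps"
  assumes b0: "b 0 \<noteq> 0" and MI: "\<alpha> \<in> multi_indices n"
    and B_def: "B = Abs_fps (\<lambda>i. if i = 0 then 0 else b i / b 0)"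
  shows "(\<Prod>i\<le>n. b i ^ \<alpha> i) = b 0 ^ n * prod_mset (image_mset (($) B) (Ma n \<alpha>))"
proof -
  define X where "X = (\<Prod>i<n. b (Suc i) ^ \<alpha> (Suc i))"
  have "prod_mset (image_mset (($) B) (Ma n \<alpha>)) = (\<Prod>x\<in>Suc ` {..<n}. (B $ x) ^ count (Ma n \<alpha>) x)"
    by (rule prod_mset_image_count[OF _ set_Ma]) simp
  also have "\<dots> = (\<Prod>i<n. (B $ Suc i) ^ count (Ma n \<alpha>) (Suc i))" by (rule prod_Suc_image)
  also have "\<dots> = (\<Prod>i<n. (b (Suc i) / b 0) ^ \<alpha> (Suc i))"
    by (intro prod.cong refl) (simp add: B_def count_Ma)
  also have "\<dots> = X / b 0 ^ sa n \<alpha>"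
    by (simp only: X_def sa_def power_divide prod_dividef power_sum)
  finally have P: "prod_mset (image_mset (($) B) (Ma n \<alpha>)) = X / b 0 ^ sa n \<alpha>" .
  have L: "(\<Prod>i\<le>n. b i ^ \<alpha> i) = b 0 ^ \<alpha> 0 * X"
    unfolding X_def by (rule shift_prod)
  have N: "b 0 ^ n = b 0 ^ \<alpha> 0 * b 0 ^ sa n \<alpha>"
    using MI_sum[OF MI] power_add[of "b 0" "\<alpha> 0" "sa n \<alpha>"] by simp
  show ?thesis unfolding L P N using b0 by simp
qed

lemma T_facts:
  assumes kn: "k \<le> n" and sk: "s \<le> k" and M: "M \<in> Ms s k"
  defines "\<alpha>' \<equiv> (\<lambda>x. if x = 0 then n - s else count M x)"
  shows "sa n \<alpha>' = s" "wt n \<alpha>' = k" "Ma n \<alpha>' = M" "\<alpha>' \<in> multi_indices n"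
proof -
  have sub: "set_mset M \<subseteq> Suc ` {..<n}" by (rule Ms_sub[OF M kn])
  have M0: "count M 0 = 0" using M by (auto simp: Ms_def not_in_iff[symmetric])
  have Mbig: "count M x = 0" if "n < x" for x
  proof -
    have "x \<notin> Suc ` {..<n}" using that by auto
    then have "x \<notin># M" using sub by blast
    then show ?thesis by (simp add: not_in_iff)
  qed
  have "size M = (\<Sum>x\<in>Suc ` {..<n}. count M x)" by (rule size_count[OF _ sub]) simp
  also have "\<dots> = (\<Sum>i<n. count M (Suc i))" by (rule sum_Suc_image)
  also have "\<dots> = sa n \<alpha>'" by (simp add: sa_def \<alpha>'_def)
  finally show sa: "sa n \<alpha>' = s" using M by (simp add: Ms_def)
  have "sum_mset M = (\<Sum>x\<in>Suc ` {..<n}. x * count M x)" by (rule summset_count[OF _ sub]) simp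
  also have "\<dots> = (\<Sum>i<n. Suc i * count M (Suc i))" by (rule sum_Suc_image)
  also have "\<dots> = wt n \<alpha>'" by (simp add: wt_shift \<alpha>'_def)
  finally show wt: "wt n \<alpha>' = k" using M by (simp add: Ms_def)
  show "Ma n \<alpha>' = M"
  proof (rule multiset_eqI)
    fix x
    show "count (Ma n \<alpha>') x = count M x"
      using M0 Mbig[of x] by (auto simp: count_Ma \<alpha>'_def)
  qed
  have z: "\<forall>i>n. \<alpha>' i = 0" using Mbig by (auto simp: \<alpha>'_def)
  have s1: "(\<Sum>i\<le>n. \<alpha>' i) = n"
    using shift_sum[of \<alpha>' n] sa sk kn unfolding sa_def by (simp add: \<alpha>'_def)
  have s2: "(\<Sum>i\<le>n. i * \<alpha>' i) \<le> n" using wt kn unfolding wt_def by simp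
  show "\<alpha>' \<in> multi_indices n" using z s1 s2 by (simp add: multi_indices_def)
qed


lemma sum_Sigma':
  "finite A \<Longrightarrow> (\<And>x. x \<in> A \<Longrightarrow> finite (B x)) \<Longrightarrow>
   (\<Sum>x\<in>A. \<Sum>y\<in>B x. g x y) = (\<Sum>p\<in>Sigma A B. g (fst p) (snd p))"
  by (simp add: sum.Sigma split_def)

theorem proposition5p7:
  fixes a c :: "nat \<Rightarrow> 'a::idom" and n :: nat
  assumes "a 0 \<noteq> 0"
  shows "frac_emb (MC a c n) =
    (\<Sum>k=0..n. frac_emb (c (n - k)) *
       fps_nth (fps_const (frac_emb (a 0)) ^ (2 * n + 1)
                * inverse (Abs_fps (\<lambda>i. frac_emb (a i)) ^ (n + 1))) k)"
proof -
  have b0: "frac_emb (a 0) \<noteq> 0" using assms by (simp add: frac_emb_eq0)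
  define B where "B = Abs_fps (\<lambda>i. if i = 0 then 0 else frac_emb (a i) / frac_emb (a 0))"
  define T where "T = (SIGMA k:{0..n}. SIGMA s:{0..k}. Ms s k)"
  define H where "H = (\<lambda>k s M. frac_emb (c (n-k)) * (frac_emb (a 0) ^ n *
      (((-1)^s * of_nat ((n+s) choose s)) *
       (of_nat (card (permutations_of_multiset M)) * prod_mset (image_mset (($) B) M)))))"
  have RHS: "(\<Sum>k=0..n. frac_emb (c (n - k)) *
       fps_nth (fps_const (frac_emb (a 0)) ^ (2 * n + 1)
                * inverse (Abs_fps (\<lambda>i. frac_emb (a i)) ^ (n + 1))) k)
      = (\<Sum>p\<in>T. H (fst p) (fst (snd p)) (snd (snd p)))"
  proof -
    have "(\<Sum>k=0..n. frac_emb (c (n - k)) *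
       fps_nth (fps_const (frac_emb (a 0)) ^ (2 * n + 1)
                * inverse (Abs_fps (\<lambda>i. frac_emb (a i)) ^ (n + 1))) k)
       = (\<Sum>k=0..n. \<Sum>s=0..k. \<Sum>M\<in>Ms s k. H k s M)"
    proof (rule sum.cong[OF refl])
      fix k
      show "frac_emb (c (n - k)) *
       fps_nth (fps_const (frac_emb (a 0)) ^ (2 * n + 1)
                * inverse (Abs_fps (\<lambda>i. frac_emb (a i)) ^ (n + 1))) k
         = (\<Sum>s=0..k. \<Sum>M\<in>Ms s k. H k s M)"
        unfolding coeff_formula[of "\<lambda>i. frac_emb (a i)" B n k, OF b0 B_def] H_def
        by (simp only: sum_distrib_left)
    qed
    also have "\<dots> = (\<Sum>k=0..n. \<Sum>q\<in>(SIGMA s:{0..k}. Ms s k). H k (fst q) (snd q))"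
      by (rule sum.cong[OF refl], rule sum_Sigma') (simp_all add: finite_Ms)
    also have "\<dots> = (\<Sum>p\<in>T. H (fst p) (fst (snd p)) (snd (snd p)))"
      unfolding T_def
      by (rule sum_Sigma'[where g = "\<lambda>k q. H k (fst q) (snd q)"]) (simp_all add: finite_Ms)
    finally show ?thesis .
  qed
  have LHS: "frac_emb (MC a c n) = (\<Sum>\<alpha>\<in>multi_indices n.
      of_int (gen_multinom (- (int n + 1)) (\<lambda>i. \<alpha> (Suc i))) * frac_emb (c (n - wt n \<alpha>))
      * (\<Prod>i\<le>n. frac_emb (a i) ^ \<alpha> i))"
    unfolding MC_def wt_def by (simp only: frac_emb_sum frac_emb_mult frac_emb_prod frac_emb_power frac_emb_of_int)
  have MID: "(\<Sum>\<alpha>\<in>multi_indices n.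
      of_int (gen_multinom (- (int n + 1)) (\<lambda>i. \<alpha> (Suc i))) * frac_emb (c (n - wt n \<alpha>))
      * (\<Prod>i\<le>n. frac_emb (a i) ^ \<alpha> i)) = (\<Sum>p\<in>T. H (fst p) (fst (snd p)) (snd (snd p)))"
  proof (rule sum.reindex_bij_witness[where i = "\<lambda>p x. if x = 0 then n - fst (snd p) else count (snd (snd p)) x"
        and j = "\<lambda>\<alpha>. (wt n \<alpha>, sa n \<alpha>, Ma n \<alpha>)"])
    fix \<alpha> assume MI: "\<alpha> \<in> multi_indices n"
    show "(\<lambda>x. if x = 0 then n - fst (snd (wt n \<alpha>, sa n \<alpha>, Ma n \<alpha>)) else count (snd (snd (wt n \<alpha>, sa n \<alpha>, Ma n \<alpha>))) x) = \<alpha>"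
    proof
      fix x
      show "(if x = 0 then n - fst (snd (wt n \<alpha>, sa n \<alpha>, Ma n \<alpha>)) else count (snd (snd (wt n \<alpha>, sa n \<alpha>, Ma n \<alpha>))) x) = \<alpha> x"
        using MI_sum[OF MI] MI_zero[OF MI, of x] by (auto simp: count_Ma)
    qed
    have w: "wt n \<alpha> \<le> n" using MI by (simp add: multi_indices_def wt_def)
    have "Ma n \<alpha> \<in> Ms (sa n \<alpha>) (wt n \<alpha>)"
    proof -
      have pos: "\<forall>x\<in>#Ma n \<alpha>. 0 < x"
      proof
        fix x assume "x \<in># Ma n \<alpha>"
        then have "count (Ma n \<alpha>) x \<noteq> 0" by simp
        then show "0 < x" by (simp add: count_Ma split: if_splits)
      qed
      then show ?thesis by (simp add: Ms_def size_Ma summ_Ma)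
    qed
    then show "(wt n \<alpha>, sa n \<alpha>, Ma n \<alpha>) \<in> T"
      using w sa_le_wt[of n \<alpha>] by (simp add: T_def)
    show "H (fst (wt n \<alpha>, sa n \<alpha>, Ma n \<alpha>)) (fst (snd (wt n \<alpha>, sa n \<alpha>, Ma n \<alpha>))) (snd (snd (wt n \<alpha>, sa n \<alpha>, Ma n \<alpha>))) =
      of_int (gen_multinom (- (int n + 1)) (\<lambda>i. \<alpha> (Suc i))) * frac_emb (c (n - wt n \<alpha>))
      * (\<Prod>i\<le>n. frac_emb (a i) ^ \<alpha> i)"
      unfolding prod_eq[of "\<lambda>i. frac_emb (a i)", OF b0 MI B_def] gm_eq[OF MI] H_def
      by (simp add: ac_simps)
  next
    fix p assume p: "p \<in> T"
    then obtain k s M where pe: "p = (k, s, M)" and kn: "k \<le> n" and sk: "s \<le> k" and M: "M \<in> Ms s k"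
      by (auto simp: T_def)
    note F = T_facts[OF kn sk M]
    show "(wt n (\<lambda>x. if x = 0 then n - fst (snd p) else count (snd (snd p)) x),
           sa n (\<lambda>x. if x = 0 then n - fst (snd p) else count (snd (snd p)) x),
           Ma n (\<lambda>x. if x = 0 then n - fst (snd p) else count (snd (snd p)) x)) = p"
      unfolding pe fst_conv snd_conv using F by (simp only:)
    show "(\<lambda>x. if x = 0 then n - fst (snd p) else count (snd (snd p)) x) \<in> multi_indices n"
      unfolding pe fst_conv snd_conv using F by (simp only:)
  qed
  show ?thesis unfolding LHS MID RHS ..
qed

end
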